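(* Let $\beta$, $R$, $\varphi$, $\beta'=\varphi(\beta)$ be as in the context (single-conjugate case), let $z_1,\dots,z_m\in R$, let $g_k(x)=\beta x+z_k$ and $g'_k(x)=\beta' x+\varphi(z_k)$ for $k=1,\dots,m$, and let $A$ be the attractor of the contracting IFS $\{g'_1,\dots,g'_m\}$. Then: (i) for each cycle $\{x_1,\dots,x_n\}\subset R$ of the IFS $\{g_1,\dots,g_m\}$, the points $\varphi(x_1),\dots,\varphi(x_n)$ form a cycle of the IFS $\{g'_1,\dots,g'_m\}$, and all of them belong to $A$; (ii) for each closed discrete set $\Lambda\subset R$ with $\Lambda=\bigcup_{k=1}^m g_k(\Lambda)$, the set $\varphi(\Lambda)=\{\varphi(x):x\in\Lambda\}$ is a dense subset of $A$; (iii) there are only finitely many closed discrete sets $\Lambda\subset R$ with $\Lambda=\bigcup_{k=1}^m g_k(\Lambda)$, and the union of these sets is the maximal such solution $\Lambda^*$.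
   Context: A Pisot unit is an algebraic integer $\beta$ whose minimal polynomial over $\mathbb{Q}$ is monic with integer coefficients and constant term $\pm1$, with $|\beta|>1$, such that all other roots except $\overline\beta$ have modulus $<1$. Single-conjugate setting: either (a) $\beta$ is non-real, $R=\mathbb{Z}[\beta]$, and the minimal polynomial of $\beta$ has, apart from $\beta,\overline\beta$, exactly one root up to complex conjugation, $\beta'$, with $\varphi:\mathbb{Q}(\beta)\to\mathbb{C}$ the embedding with $\varphi(\beta)=\beta'$; or (b) $\beta$ is real, $R=\mathbb{Z}[\zeta]$ with $\zeta=e^{2\pi i/n}$, the only automorphisms of $\mathbb{Q}(\zeta)$ fixing $\beta$ are the identity and complex conjugation, and there is exactly one integer $\ell$ with $1<\ell<n/2$, $\gcd(\ell,n)=1$; $\varphi$ is the automorphism $\zeta\mapsto\zeta^\ell$. In both cases $|\beta'|<1$. A cycle of an IFS $\{h_1,\dots,h_m\}$ is a finite set $\{x_1,\dots,x_n\}$ with indices $j_1,\dots,j_n$ such that $h_{j_k}(x_k)=x_{k+1}$ for $k<n$ and $h_{j_n}(x_n)=x_1$. The attractor of a contracting IFS is the unique nonempty compact $A$ with $A=\bigcup_k g'_k(A)$. Discrete: each ball contains finitely many points. *)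

theory Defs
  imports "HOL-Analysis.Analysis" "HOL-Computational_Algebra.Computational_Algebra"
begin

abbreviation ipoly :: "int poly \<Rightarrow> complex \<Rightarrow> complex" where
  "ipoly q a \<equiv> poly (map_poly of_int q) a"

definition Zring :: "complex \<Rightarrow> complex set" where
  "Zring a = {ipoly q a | q. True}"

text \<open>p is the minimal polynomial of b over Q, normalised as a monic integer
  polynomial (monic + irreducible over Z is equivalent to irreducible over Q).\<close>
definition int_minpoly :: "int poly \<Rightarrow> complex \<Rightarrow> bool" where
  "int_minpoly p b \<longleftrightarrow> lead_coeff p = 1 \<and> irreducible p \<and> ipoly p b = 0"

definition pisot_unit :: "complex \<Rightarrow> bool" where
  "pisot_unit b \<longleftrightarrow> (\<exists>p. int_minpoly p b \<and> (coeff p 0 = 1 \<or> coeff p 0 = -1) \<and>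
      1 < norm b \<and>
      (\<forall>w. ipoly p w = 0 \<longrightarrow> w \<noteq> b \<longrightarrow> w \<noteq> cnj b \<longrightarrow> norm w < 1))"

text \<open>Case (a): b non-real, R = Z[b], phi the embedding of Q(b) sending b to b'
  (described on R = Z[b] by q(b) |-> q(b')).\<close>
definition single_conj_a :: "complex \<Rightarrow> complex set \<Rightarrow> (complex \<Rightarrow> complex) \<Rightarrow> bool" where
  "single_conj_a b R \<phi> \<longleftrightarrow> Im b \<noteq> 0 \<and> R = Zring b \<and>
     (\<exists>p b'. int_minpoly p b \<and> {w. ipoly p w = 0} = {b, cnj b, b', cnj b'} \<and>
        b' \<notin> {b, cnj b} \<and> (\<forall>q. \<phi> (ipoly q b) = ipoly q b') \<and> norm b' < 1)"

text \<open>Case (b): b real, R = Z[zeta], zeta = exp(2 pi i/n); the automorphisms of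
  Q(zeta) are zeta |-> zeta^j with j coprime to n; phi is zeta |-> zeta^l.\<close>
definition single_conj_b :: "complex \<Rightarrow> complex set \<Rightarrow> (complex \<Rightarrow> complex) \<Rightarrow> bool" where
  "single_conj_b b R \<phi> \<longleftrightarrow> Im b = 0 \<and>
     (\<exists>n::nat. \<exists>l::nat. n \<ge> 1 \<and>
        (let \<zeta> = exp (2 * pi * \<i> / of_nat n) in
          R = Zring \<zeta> \<and> b \<in> R \<and>
          (\<forall>j q. j < n \<and> coprime j n \<and> ipoly q \<zeta> = b \<and> ipoly q (\<zeta> ^ j) = b
                 \<longrightarrow> j = 1 \<or> j = n - 1) \<and>
          {k::nat. 1 < k \<and> 2 * k < n \<and> coprime k n} = {l} \<and>
          (\<forall>q. \<phi> (ipoly q \<zeta>) = ipoly q (\<zeta> ^ l)) \<and>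
          norm (\<phi> b) < 1))"

definition single_conjugate_setting :: "complex \<Rightarrow> complex set \<Rightarrow> (complex \<Rightarrow> complex) \<Rightarrow> bool" where
  "single_conjugate_setting b R \<phi> \<longleftrightarrow> pisot_unit b \<and>
     (single_conj_a b R \<phi> \<or> single_conj_b b R \<phi>)"

definition is_cycle :: "(nat \<Rightarrow> complex \<Rightarrow> complex) \<Rightarrow> nat \<Rightarrow> complex list \<Rightarrow> bool" where
  "is_cycle h m xs \<longleftrightarrow> xs \<noteq> [] \<and> (\<exists>js. length js = length xs \<and>
     (\<forall>k < length xs. js ! k < m \<and> h (js ! k) (xs ! k) = xs ! ((k + 1) mod length xs)))"

definition discrete_set :: "complex set \<Rightarrow> bool" where
  "discrete_set L \<longleftrightarrow> (\<forall>c r. finite (L \<inter> ball c r))"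

end

theory Submission
  imports Defs
begin

lemma mp_add: "map_poly (of_int::int\<Rightarrow>complex) (p + q) = map_poly of_int p + map_poly of_int q"
  by (rule poly_eqI) (simp add: coeff_map_poly)
lemma mp_diff: "map_poly (of_int::int\<Rightarrow>complex) (p - q) = map_poly of_int p - map_poly of_int q"
  by (rule poly_eqI) (simp add: coeff_map_poly)
lemma mp_mult: "map_poly (of_int::int\<Rightarrow>complex) (p * q) = map_poly of_int p * map_poly of_int q"
  by (rule poly_eqI) (simp add: coeff_map_poly coeff_mult)
lemma mp_smult: "map_poly (of_int::int\<Rightarrow>complex) (smult c q) = smult (of_int c) (map_poly of_int q)"
  by (rule poly_eqI) (simp add: coeff_map_poly)
lemma mp_pderiv: "map_poly (of_int::int\<Rightarrow>complex) (pderiv q) = pderiv (map_poly of_int q)"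
  by (rule poly_eqI) (simp add: coeff_map_poly coeff_pderiv)
lemma mp_degree: "degree (map_poly (of_int::int\<Rightarrow>complex) q) = degree q"
  by (rule degree_map_poly) simp
lemma mp_eq0: "map_poly (of_int::int\<Rightarrow>complex) q = 0 \<longleftrightarrow> q = 0"
  by (subst map_poly_eq_0_iff) auto

lemma mp_const: "map_poly (of_int::int\<Rightarrow>complex) [:a:] = [:of_int a:]"
  by (rule poly_eqI) (simp add: coeff_map_poly coeff_pCons split: nat.split)

lemma ipoly_add: "ipoly (p + q) x = ipoly p x + ipoly q x" by (simp add: mp_add)
lemma ipoly_mult: "ipoly (p * q) x = ipoly p x * ipoly q x" by (simp add: mp_mult)
lemma ipoly_cnj: "ipoly q (cnj x) = cnj (ipoly q x)"
  by (subst poly_cnj_real) (auto simp: coeff_map_poly)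

lemma irr_min_degree:
  fixes p Q :: "int poly"
  assumes irr: "irreducible p" and pr: "ipoly p r = 0" and Qr: "ipoly Q r = 0" and Q0: "Q \<noteq> 0"
  shows "degree p \<le> degree Q"
proof (rule ccontr)
  assume less: "\<not> degree p \<le> degree Q"
  define P where "P = (\<lambda>n. \<exists>Q::int poly. Q \<noteq> 0 \<and> ipoly Q r = 0 \<and> degree Q = n)"
  have "P (degree Q)" using Q0 Qr P_def by blast
  define n0 where "n0 = (LEAST n. P n)"
  have "P n0" unfolding n0_def by (rule LeastI) fact
  then obtain Q0 where Q0: "Q0 \<noteq> 0" "ipoly Q0 r = 0" "degree Q0 = n0" using P_def by blast
  have minQ: "n0 \<le> degree S" if "S \<noteq> 0" "ipoly S r = 0" for S
    unfolding n0_def by (rule Least_le) (use that P_def in blast)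
  have "n0 \<le> degree Q" using minQ Q0 Qr \<open>Q\<noteq>0\<close> by blast
  obtain s t where st: "pseudo_divmod p Q0 = (s, t)" by (cases "pseudo_divmod p Q0")
  define c where "c = coeff Q0 (degree Q0) ^ (Suc (degree p) - degree Q0)"
  have eq: "smult c p = Q0 * s + t" and tdeg: "t = 0 \<or> degree t < degree Q0"
    using pseudo_divmod[OF Q0(1) st] c_def by auto
  have c0: "c \<noteq> 0" using Q0(1) c_def by simp
  have "ipoly t r = 0"
  proof -
    have "ipoly (smult c p) r = ipoly (Q0 * s + t) r" using eq by simp
    thus ?thesis using pr Q0(2) by (simp add: mp_smult mp_add mp_mult)
  qed
  with tdeg minQ Q0 have t0: "t = 0" by force
  have irr': "prime_elem p" using irr by (rule irreducible_imp_prime_elem)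
  have this_dvd: "p dvd Q0 * s" using eq t0 by (metis add.right_neutral dvd_triv_right mult.commute smult_dvd_cancel dvd_refl dvd_smult_cancel) 
  have p0: "p \<noteq> 0" using irr by auto
  from prime_elem_dvd_mult_iff[OF irr'] this_dvd have "p dvd Q0 \<or> p dvd s" by blast
  then show False
  proof
    assume "p dvd Q0"
    hence "degree p \<le> degree Q0" using Q0(1) by (rule dvd_imp_degree_le)
    thus False using less \<open>n0 \<le> degree Q\<close> Q0(3) by simp
  next
    assume "p dvd s"
    then obtain u where u: "s = p * u" by (auto simp: dvd_def)
    have "smult c p = [:c:] * p" by simp
    hence "p * [:c:] = p * (Q0 * u)" using eq t0 u by (simp add: algebra_simps)
    hence "[:c:] = Q0 * u" using p0 by (metis mult_cancel_left)
    hence "degree (Q0 * u) = 0" by (metis degree_pCons_0)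
    moreover have "u \<noteq> 0" using \<open>[:c:] = Q0 * u\<close> c0 by auto
    ultimately have "degree Q0 = 0" using Q0(1) by (simp add: degree_mult_eq)
    then obtain a where "Q0 = [:a:]" by (metis degree_eq_zeroE)
    thus False using Q0(1,2) by (simp add: mp_const)
  qed
qed

definition lag :: "complex set \<Rightarrow> complex \<Rightarrow> complex poly" where
  "lag N a = smult (inverse (\<Prod>b\<in>N-{a}. a - b)) (\<Prod>b\<in>N-{a}. [:-b,1:])"

lemma poly_lag:
  assumes "finite N" "a \<in> N" "x \<in> N"
  shows "poly (lag N a) x = (if x = a then 1 else 0)"
proof -
  have nz: "(\<Prod>b\<in>N-{a}. a - b) \<noteq> 0" using assms by (simp add: prod_zero_iff)
  have "poly (lag N a) x = inverse (\<Prod>b\<in>N-{a}. a - b) * (\<Prod>b\<in>N-{a}. x - b)"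
    by (simp add: lag_def poly_prod)
  also have "\<dots> = (if x = a then 1 else 0)"
  proof (cases "x = a")
    case True thus ?thesis using nz by simp
  next
    case False
    hence "(\<Prod>b\<in>N-{a}. x - b) = 0" using assms by simp
    thus ?thesis using False by simp
  qed
  finally show ?thesis .
qed

lemma degree_lag:
  assumes "finite N" "a \<in> N"
  shows "degree (lag N a) \<le> card N - 1"
proof -
  have "degree (lag N a) \<le> degree (\<Prod>b\<in>N-{a}. [:-b,1:])"
    by (simp add: lag_def)
  also have "\<dots> \<le> sum (degree \<circ> (\<lambda>b. [:-b,1:])) (N-{a})"
    by (rule degree_prod_sum_le) (use assms in simp)
  also have "\<dots> = card (N - {a})" by simp
  also have "\<dots> = card N - 1" using assms by simp
  finally show ?thesis .
qed

lemma lagrange_interp: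
  fixes Q :: "complex poly"
  assumes "finite N" "degree Q < card N"
  shows "Q = (\<Sum>a\<in>N. smult (poly Q a) (lag N a))"
proof (rule poly_eqI_degree[of N])
  fix x assume x: "x \<in> N"
  have "poly (\<Sum>a\<in>N. smult (poly Q a) (lag N a)) x = (\<Sum>a\<in>N. poly Q a * (if x = a then 1 else 0))"
    by (simp add: poly_sum poly_lag assms x cong: sum.cong)
  also have "\<dots> = poly Q x" using assms x by (simp add: if_distrib sum.delta' cong: if_cong)
  finally show "poly Q x = poly (\<Sum>a\<in>N. smult (poly Q a) (lag N a)) x" by simp
next
  show "degree Q < card N" by fact
next
  have "card N > 0" using assms by linarith
  have "degree (\<Sum>a\<in>N. smult (poly Q a) (lag N a)) \<le> card N - 1"
    by (rule degree_sum_le) (use assms degree_lag in \<open>auto intro: order.trans[OF degree_smult_le]\<close>)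
  thus "degree (\<Sum>a\<in>N. smult (poly Q a) (lag N a)) < card N" using \<open>card N > 0\<close> by linarith
qed

lemma lagrange_bound:
  fixes N :: "complex set"
  assumes "finite N"
  shows "\<exists>K\<ge>0. \<forall>Q::complex poly. degree Q < card N \<longrightarrow>
            (\<forall>j. norm (coeff Q j) \<le> K * (\<Sum>a\<in>N. norm (poly Q a)))"
proof -
  define K where "K = (\<Sum>a\<in>N. \<Sum>i<card N. norm (coeff (lag N a) i))"
  have K0: "K \<ge> 0" unfolding K_def by (intro sum_nonneg) auto
  have Kb: "norm (coeff (lag N a) j) \<le> K" if "a \<in> N" for a j
  proof (cases "j < card N")
    case True
    have "norm (coeff (lag N a) j) \<le> (\<Sum>i<card N. norm (coeff (lag N a) i))"
      by (rule member_le_sum) (use True in auto)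
    also have "\<dots> \<le> K" unfolding K_def
      by (rule member_le_sum[where f="\<lambda>a. \<Sum>i<card N. norm (coeff (lag N a) i)"]) (use that assms in \<open>auto intro: sum_nonneg\<close>)
    finally show ?thesis .
  next
    case False
    have "card N > 0" using that assms card_gt_0_iff by blast
    hence "degree (lag N a) < j" using degree_lag[OF assms that] False by linarith
    hence "coeff (lag N a) j = 0" by (rule coeff_eq_0)
    thus ?thesis using K0 by simp
  qed
  show ?thesis
  proof (intro exI[of _ K] conjI allI impI K0)
    fix Q :: "complex poly" and j assume dQ: "degree Q < card N"
    have "coeff Q j = (\<Sum>a\<in>N. poly Q a * coeff (lag N a) j)"
      by (subst lagrange_interp[OF assms dQ]) (simp add: coeff_sum)
    hence "norm (coeff Q j) \<le> (\<Sum>a\<in>N. norm (poly Q a) * norm (coeff (lag N a) j))"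
      by (metis (no_types, lifting) norm_mult norm_sum sum.cong)
    also have "\<dots> \<le> (\<Sum>a\<in>N. norm (poly Q a) * K)"
      by (intro sum_mono mult_left_mono Kb) auto
    also have "\<dots> = K * (\<Sum>a\<in>N. norm (poly Q a))" by (simp add: sum_distrib_left mult.commute)
    finally show "norm (coeff Q j) \<le> K * (\<Sum>a\<in>N. norm (poly Q a))" .
  qed
qed

lemma irr_card_roots:
  fixes p :: "int poly"
  assumes irr: "irreducible p" and lc: "lead_coeff p = 1" and pb: "ipoly p b = 0"
  shows "degree p \<le> card {w. ipoly p w = 0}"
proof -
  define P where "P = map_poly (of_int::int\<Rightarrow>complex) p"
  have p0: "p \<noteq> 0" using irr by auto
  have P0: "P \<noteq> 0" using p0 by (simp add: P_def mp_eq0)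
  have dp: "degree p \<noteq> 0"
  proof
    assume "degree p = 0"
    then obtain a where "p = [:a:]" by (metis degree_eq_zeroE)
    with lc have "p = 1" by (simp add: one_pCons)
    with pb show False by simp
  qed
  have "rsquarefree P" unfolding rsquarefree_roots
  proof (intro allI notI)
    fix a assume "poly P a = 0 \<and> poly (pderiv P) a = 0"
    hence r1: "ipoly p a = 0" and r2: "ipoly (pderiv p) a = 0" by (auto simp: P_def mp_pderiv)
    have "pderiv p \<noteq> 0" using dp by (simp add: pderiv_eq_0_iff)
    from irr_min_degree[OF irr r1 r2 this] have "degree p \<le> degree (pderiv p)" .
    with dp show False by (simp add: degree_pderiv)
  qed
  from complex_poly_decompose_rsquarefree[OF this]
  have "degree P = degree (smult (lead_coeff P) (\<Prod>z|poly P z = 0. [:-z, 1:]))" by simp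
  also have "\<dots> = degree (\<Prod>z|poly P z = 0. [:-z, 1:])" using P0 by simp
  also have "\<dots> = (\<Sum>z|poly P z = 0. degree [:-z, 1:])"
    by (rule degree_prod_sum_eq) auto
  also have "\<dots> = card {z. poly P z = 0}" by simp
  finally show ?thesis by (simp add: P_def mp_degree)
qed

lemma finite_int_polys:
  fixes B :: int
  shows "finite {t::int poly. degree t < d \<and> (\<forall>j. \<bar>coeff t j\<bar> \<le> B)}"
proof -
  have "{t::int poly. degree t < d \<and> (\<forall>j. \<bar>coeff t j\<bar> \<le> B)} \<subseteq>
        Poly ` {xs. set xs \<subseteq> {-B..B} \<and> length xs \<le> d}"
  proof
    fix t :: "int poly" assume t: "t \<in> {t. degree t < d \<and> (\<forall>j. \<bar>coeff t j\<bar> \<le> B)}"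
    have "set (coeffs t) \<subseteq> {-B..B}"
    proof
      fix x assume "x \<in> set (coeffs t)"
      then obtain i where "i < length (coeffs t)" "x = coeffs t ! i" by (auto simp: in_set_conv_nth)
      hence "x = coeff t i" by (metis coeffs_nth length_coeffs_degree less_Suc_eq_le list.size(3) not_less_zero coeffs_eq_Nil)
      thus "x \<in> {-B..B}" using t by (auto simp: abs_le_iff) (smt (verit))
    qed
    moreover have "length (coeffs t) \<le> d" using t by (cases "t = 0") (auto simp: length_coeffs_degree)
    ultimately show "t \<in> Poly ` {xs. set xs \<subseteq> {-B..B} \<and> length xs \<le> d}"
      by (intro image_eqI[of _ _ "coeffs t"]) auto
  qed
  moreover have "finite (Poly ` {xs. set xs \<subseteq> {-B..B} \<and> length xs \<le> d})"
    by (intro finite_imageI finite_lists_length_le) auto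
  ultimately show ?thesis by (rule finite_subset)
qed

lemma fin_lattice:
  fixes P :: "int poly" and \<gamma> w :: complex and N :: "complex set"
  assumes lc: "lead_coeff P = 1" and P\<gamma>: "ipoly P \<gamma> = 0" and Pw: "ipoly P w = 0"
    and fin: "finite N" and deg: "degree P \<le> card N" and Nsub: "N \<subseteq> {\<gamma>, cnj \<gamma>, w, cnj w}"
  shows "finite {(ipoly q \<gamma>, ipoly q w) | q. norm (ipoly q \<gamma>) \<le> r \<and> norm (ipoly q w) \<le> s}"
proof -
  obtain K where K0: "K \<ge> 0" and K: "\<And>Q::complex poly. degree Q < card N \<Longrightarrow>
            (\<forall>j. norm (coeff Q j) \<le> K * (\<Sum>a\<in>N. norm (poly Q a)))"
    using lagrange_bound[OF fin] by blast
  define B :: int where "B = ceiling (K * (real (card N) * (r + s)))"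
  define T where "T = {t::int poly. degree t < degree P \<and> (\<forall>j. \<bar>coeff t j\<bar> \<le> B)}"
  have P0: "P \<noteq> 0" using lc by auto
  have dP: "degree P \<noteq> 0"
  proof
    assume "degree P = 0"
    then obtain a where "P = [:a:]" by (metis degree_eq_zeroE)
    with lc have "P = 1" by (simp add: one_pCons)
    with P\<gamma> show False by simp
  qed
  have "{(ipoly q \<gamma>, ipoly q w) | q. norm (ipoly q \<gamma>) \<le> r \<and> norm (ipoly q w) \<le> s}
        \<subseteq> (\<lambda>t. (ipoly t \<gamma>, ipoly t w)) ` T"
  proof
    fix x assume "x \<in> {(ipoly q \<gamma>, ipoly q w) | q. norm (ipoly q \<gamma>) \<le> r \<and> norm (ipoly q w) \<le> s}"
    then obtain q where x: "x = (ipoly q \<gamma>, ipoly q w)" and qr: "norm (ipoly q \<gamma>) \<le> r"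
      and qs: "norm (ipoly q w) \<le> s" by blast
    obtain u t where ut: "pseudo_divmod q P = (u, t)" by (cases "pseudo_divmod q P")
    from pseudo_divmod[OF P0 ut] lc have eq: "q = P * u + t" and td: "t = 0 \<or> degree t < degree P"
      by auto
    have e1: "ipoly t \<gamma> = ipoly q \<gamma>" using eq P\<gamma> by (simp add: ipoly_add ipoly_mult)
    have e2: "ipoly t w = ipoly q w" using eq Pw by (simp add: ipoly_add ipoly_mult)
    have dt: "degree t < degree P" using td dP by auto
    have "t \<in> T" unfolding T_def
    proof (intro CollectI conjI allI dt)
      fix j
      define Q where "Q = map_poly (of_int::int\<Rightarrow>complex) t"
      have "degree Q < card N" using dt deg by (simp add: Q_def mp_degree)
      hence "norm (coeff Q j) \<le> K * (\<Sum>a\<in>N. norm (poly Q a))" using K by blast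
      also have "(\<Sum>a\<in>N. norm (poly Q a)) \<le> (\<Sum>a\<in>N. r + s)"
      proof (rule sum_mono)
        fix a assume "a \<in> N"
        hence "a \<in> {\<gamma>, cnj \<gamma>, w, cnj w}" using Nsub by blast
        moreover have "norm (ipoly q \<gamma>) \<le> r + s" "norm (ipoly q w) \<le> r + s"
          using qr qs norm_ge_zero[of "ipoly q \<gamma>"] norm_ge_zero[of "ipoly q w"] by linarith+
        ultimately show "norm (poly Q a) \<le> r + s" using e1 e2
          by (auto simp: Q_def ipoly_cnj)
      qed
      hence "K * (\<Sum>a\<in>N. norm (poly Q a)) \<le> K * (\<Sum>a\<in>N. r + s)" using K0 by (rule mult_left_mono)
      finally have "norm (coeff Q j) \<le> K * (real (card N) * (r + s))" by simp
      hence "real_of_int \<bar>coeff t j\<bar> \<le> K * (real (card N) * (r + s))"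
        by (simp add: Q_def coeff_map_poly)
      thus "\<bar>coeff t j\<bar> \<le> B" unfolding B_def by linarith
    qed
    thus "x \<in> (\<lambda>t. (ipoly t \<gamma>, ipoly t w)) ` T" using x e1 e2 by (intro image_eqI[of _ _ t]) auto
  qed
  moreover have "finite T" unfolding T_def by (rule finite_int_polys)
  ultimately show ?thesis by (meson finite_imageI finite_subset)
qed

lemma discrete_closed:
  assumes "discrete_set L" shows "closed L"
proof -
  have "closure L \<subseteq> L"
  proof
    fix x assume x: "x \<in> closure L"
    have "ball x 1 \<inter> closure L \<subseteq> closure (ball x 1 \<inter> L)"
      by (rule open_Int_closure_subset) simp
    moreover have "finite (ball x 1 \<inter> L)" using assms unfolding discrete_set_def
      by (metis inf_commute)
    hence "closure (ball x 1 \<inter> L) = ball x 1 \<inter> L" by (simp add: finite_imp_closed)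
    ultimately show "x \<in> L" using x by auto
  qed
  thus ?thesis by (simp add: closure_subset_eq)
qed

locale ifs =
  fixes \<beta> :: complex and R :: "complex set" and \<phi> :: "complex \<Rightarrow> complex"
    and m :: nat and z :: "nat \<Rightarrow> complex" and A :: "complex set"
  assumes hom: "\<And>x k. x \<in> R \<Longrightarrow> k < m \<Longrightarrow> \<phi> (\<beta> * x + z k) = \<phi> \<beta> * \<phi> x + \<phi> (z k)"
    and b1: "1 < norm \<beta>" and c1: "norm (\<phi> \<beta>) < 1"
    and fin: "\<And>r s. finite {x\<in>R. norm x \<le> r \<and> norm (\<phi> x) \<le> s}"
    and cA: "compact A" and nA: "A \<noteq> {}"
    and eqA: "A = (\<Union>k<m. (\<lambda>x. \<phi> \<beta> * x + \<phi> (z k)) ` A)"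
begin

lemma hA: "k < m \<Longrightarrow> a \<in> A \<Longrightarrow> \<phi> \<beta> * a + \<phi> (z k) \<in> A"
proof -
  assume "k < m" "a \<in> A"
  hence "\<phi> \<beta> * a + \<phi> (z k) \<in> (\<Union>k<m. (\<lambda>x. \<phi> \<beta> * x + \<phi> (z k)) ` A)" by blast
  thus ?thesis using equalityD2[OF eqA] by blast
qed

lemma contract:
  assumes "k < m"
  shows "infdist (\<phi> \<beta> * y + \<phi> (z k)) A \<le> norm (\<phi> \<beta>) * infdist y A"
proof -
  have "closed A" using cA by (rule compact_imp_closed)
  then obtain a where a: "a \<in> A" "infdist y A = dist y a" using nA by (rule infdist_attains_inf)
  have "infdist (\<phi> \<beta> * y + \<phi> (z k)) A \<le> dist (\<phi> \<beta> * y + \<phi> (z k)) (\<phi> \<beta> * a + \<phi> (z k))"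
    by (rule infdist_le) (rule hA[OF assms a(1)])
  also have "\<dots> = norm (\<phi> \<beta>) * dist y a"
    by (simp add: dist_norm norm_mult[symmetric] algebra_simps)
  finally show ?thesis using a by simp
qed

lemma finite_back:
  assumes "finite P" and bk: "\<And>p. p \<in> P \<Longrightarrow> \<exists>k<m. \<exists>q\<in>P. p = \<phi> \<beta> * q + \<phi> (z k)"
  shows "P \<subseteq> A"
proof (cases "P = {}")
  case True thus ?thesis by simp
next
  case False
  define M where "M = Max ((\<lambda>p. infdist p A) ` P)"
  have Mge: "infdist p A \<le> M" if "p \<in> P" for p
    unfolding M_def using that assms(1) by (intro Max_ge) auto
  have "M \<in> (\<lambda>p. infdist p A) ` P" unfolding M_def using False assms(1) by (intro Max_in) auto
  then obtain p0 where p0: "p0 \<in> P" "M = infdist p0 A" by blast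
  obtain k q where kq: "k < m" "q \<in> P" "p0 = \<phi> \<beta> * q + \<phi> (z k)" using bk[OF p0(1)] by blast
  have "M \<le> norm (\<phi> \<beta>) * infdist q A" using contract[OF kq(1), of q] p0 kq by simp
  also have "\<dots> \<le> norm (\<phi> \<beta>) * M" by (intro mult_left_mono Mge kq) auto
  finally have "M \<le> norm (\<phi> \<beta>) * M" .
  moreover have "M \<ge> 0" using p0 by (simp add: infdist_nonneg)
  ultimately have M0: "M = 0" using c1
    by (smt (verit, best) mult_le_cancel_right1 norm_ge_zero)
  show ?thesis
  proof
    fix p assume "p \<in> P"
    hence "infdist p A = 0" using Mge[of p] M0 by (simp add: infdist_nonneg order_antisym)
    moreover have "closed A" using cA by (rule compact_imp_closed)
    ultimately show "p \<in> A" using nA in_closure_iff_infdist_zero[of A p] closure_closed by auto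
  qed
qed

definition "Zs = (\<Sum>k<m. norm (z k))"
definition "r1 = Zs / (norm \<beta> - 1)"

lemma back_bound:
  assumes "k < m" "x = \<beta> * y + z k"
  shows "norm y - r1 \<le> (norm x - r1) / norm \<beta>"
proof -
  have nb: "norm \<beta> > 0" using b1 by linarith
  have zk: "norm (z k) \<le> Zs" unfolding Zs_def by (rule member_le_sum) (use assms in auto)
  have "y = (x - z k) / \<beta>" using assms nb by (auto simp: field_simps)
  hence "norm y = norm (x - z k) / norm \<beta>" by (simp add: norm_divide)
  also have "\<dots> \<le> (norm x + Zs) / norm \<beta>"
    by (intro divide_right_mono) (use norm_triangle_ineq4[of x "z k"] zk in auto)
  finally have "norm y \<le> (norm x + Zs) / norm \<beta>" .
  moreover have "Zs = r1 * (norm \<beta> - 1)" unfolding r1_def using b1 by simp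
  ultimately have "norm y \<le> (norm x + r1 * (norm \<beta> - 1)) / norm \<beta>" by simp
  thus ?thesis using nb by (simp add: field_simps)
qed

lemma r1_nonneg: "r1 \<ge> 0"
  unfolding r1_def Zs_def using b1 by (intro divide_nonneg_pos sum_nonneg) auto

lemma sol_in_A:
  assumes LR: "L \<subseteq> R" and dL: "discrete_set L" and Lsub: "L \<subseteq> (\<Union>k<m. (\<lambda>x. \<beta> * x + z k) ` L)"
  shows "\<phi> ` L \<subseteq> A"
proof -
  define F where "F = L \<inter> cball 0 (r1 + 1)"
  have "finite (L \<inter> ball 0 (r1 + 2))" using dL unfolding discrete_set_def by blast
  moreover have "F \<subseteq> L \<inter> ball 0 (r1 + 2)" unfolding F_def by auto
  ultimately have fF: "finite F" by (rule finite_subset[rotated])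
  have step: "\<exists>k<m. \<exists>y\<in>L. x = \<beta> * y + z k \<and> norm y - r1 \<le> (norm x - r1) / norm \<beta>" if "x \<in> L" for x
  proof -
    from that Lsub obtain k y where "k < m" "y \<in> L" "x = \<beta> * y + z k" by blast
    thus ?thesis using back_bound by blast
  qed
  have "\<phi> ` F \<subseteq> A"
  proof (rule finite_back)
    show "finite (\<phi> ` F)" using fF by simp
  next
    fix p assume "p \<in> \<phi> ` F"
    then obtain x where x: "x \<in> F" "p = \<phi> x" by blast
    then obtain k y where ky: "k < m" "y \<in> L" "x = \<beta> * y + z k" "norm y - r1 \<le> (norm x - r1) / norm \<beta>"
      using step F_def by blast
    have "norm x - r1 \<le> 1" using x F_def by auto
    hence "(norm x - r1) / norm \<beta> \<le> 1" using b1 by (subst pos_divide_le_eq) auto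
    hence "y \<in> F" using ky F_def by auto
    moreover have "p = \<phi> \<beta> * \<phi> y + \<phi> (z k)" using x ky hom LR by auto
    ultimately show "\<exists>k<m. \<exists>q\<in>\<phi> ` F. p = \<phi> \<beta> * q + \<phi> (z k)" using ky by blast
  qed
  have ind: "\<forall>x\<in>L. norm x - r1 \<le> norm \<beta> ^ n \<longrightarrow> \<phi> x \<in> A" for n
  proof (induction n)
    case 0
    show ?case using \<open>\<phi> ` F \<subseteq> A\<close> F_def by auto
  next
    case (Suc n)
    show ?case
    proof (intro ballI impI)
      fix x assume x: "x \<in> L" "norm x - r1 \<le> norm \<beta> ^ Suc n"
      then obtain k y where ky: "k < m" "y \<in> L" "x = \<beta> * y + z k" "norm y - r1 \<le> (norm x - r1) / norm \<beta>"
        using step by blast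
      have "(norm x - r1) / norm \<beta> \<le> norm \<beta> ^ n" using x b1 by (subst pos_divide_le_eq) (auto simp: mult.commute)
      hence "\<phi> y \<in> A" using Suc ky by force
      moreover have "\<phi> x = \<phi> \<beta> * \<phi> y + \<phi> (z k)" using ky hom LR by auto
      ultimately show "\<phi> x \<in> A" using hA ky by simp
    qed
  qed
  show ?thesis
  proof
    fix p assume "p \<in> \<phi> ` L"
    then obtain x where x: "x \<in> L" "p = \<phi> x" by blast
    obtain n where "norm x - r1 < norm \<beta> ^ n" using real_arch_pow[OF b1] by blast
    thus "p \<in> A" using ind[of n] x by auto
  qed
qed

end

context ifs begin

lemma part1:
  assumes xsR: "set xs \<subseteq> R" and cyc: "is_cycle (\<lambda>k x. \<beta> * x + z k) m xs"
  shows "is_cycle (\<lambda>k x. \<phi> \<beta> * x + \<phi> (z k)) m (map \<phi> xs) \<and> \<phi> ` set xs \<subseteq> A"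
proof -
  from cyc obtain js where ne: "xs \<noteq> []" and js: "length js = length xs"
    and jsp: "\<And>k. k < length xs \<Longrightarrow> js ! k < m \<and> \<beta> * (xs ! k) + z (js ! k) = xs ! ((k + 1) mod length xs)"
    unfolding is_cycle_def by blast
  define n where "n = length xs"
  have n0: "n > 0" using ne n_def by simp
  have img: "\<phi> (xs ! ((k + 1) mod n)) = \<phi> \<beta> * \<phi> (xs ! k) + \<phi> (z (js ! k))" if "k < n" for k
  proof -
    have "xs ! k \<in> R" using xsR that n_def by auto
    thus ?thesis using jsp[of k] that n_def hom by metis
  qed
  have c1: "is_cycle (\<lambda>k x. \<phi> \<beta> * x + \<phi> (z k)) m (map \<phi> xs)"
    unfolding is_cycle_def
  proof (intro conjI exI[of _ js] allI impI)
    show "map \<phi> xs \<noteq> []" using ne by simp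
    show "length js = length (map \<phi> xs)" using js by simp
  next
    fix k assume k: "k < length (map \<phi> xs)"
    show "js ! k < m" using jsp k by simp
    have "(k + 1) mod n < n" using n0 by simp
    thus "\<phi> \<beta> * map \<phi> xs ! k + \<phi> (z (js ! k)) = map \<phi> xs ! ((k + 1) mod length (map \<phi> xs))"
      using img[of k] k n_def by simp
  qed
  have "\<phi> ` set xs \<subseteq> A"
  proof (rule finite_back)
    show "finite (\<phi> ` set xs)" by simp
  next
    fix p assume "p \<in> \<phi> ` set xs"
    then obtain i where i: "i < n" "p = \<phi> (xs ! i)" by (auto simp: in_set_conv_nth n_def)
    define k where "k = (i + n - 1) mod n"
    have k: "k < n" using n0 k_def by simp
    have "(k + 1) mod n = (i + n - 1 + 1) mod n" unfolding k_def by (simp add: mod_Suc_eq)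
    also have "i + n - 1 + 1 = i + n" using n0 by simp
    also have "(i + n) mod n = i" using i by simp
    finally have ki: "(k + 1) mod n = i" .
    have "p = \<phi> \<beta> * \<phi> (xs ! k) + \<phi> (z (js ! k))" using img[OF k] ki i by simp
    moreover have "js ! k < m" using jsp k n_def by simp
    moreover have "\<phi> (xs ! k) \<in> \<phi> ` set xs" using k n_def by simp
    ultimately show "\<exists>k<m. \<exists>q\<in>\<phi> ` set xs. p = \<phi> \<beta> * q + \<phi> (z k)" by blast
  qed
  with c1 show ?thesis by blast
qed

lemma part2:
  assumes LR: "L \<subseteq> R" and ne: "L \<noteq> {}" and dL: "discrete_set L"
    and eqL: "L = (\<Union>k<m. (\<lambda>x. \<beta> * x + z k) ` L)"
  shows "\<phi> ` L \<subseteq> A \<and> A \<subseteq> closure (\<phi> ` L)"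
proof -
  have sub: "\<phi> ` L \<subseteq> A" using sol_in_A[OF LR dL] eqL by blast
  obtain x0 where x0: "x0 \<in> L" using ne by blast
  have fwd: "\<beta> * x + z k \<in> L" if "x \<in> L" "k < m" for x k
  proof -
    have "\<beta> * x + z k \<in> (\<Union>k<m. (\<lambda>x. \<beta> * x + z k) ` L)" using that by blast
    thus ?thesis using equalityD2[OF eqL] by blast
  qed
  have "bounded A" using cA by (rule compact_imp_bounded)
  then obtain Bd where Bd: "\<And>a. a \<in> A \<Longrightarrow> norm a \<le> Bd" unfolding bounded_iff by blast
  define D where "D = Bd + norm (\<phi> x0) + 1"
  have D: "dist a (\<phi> x0) \<le> D" if "a \<in> A" for a
    using Bd[OF that] norm_triangle_ineq4[of a "\<phi> x0"] unfolding D_def dist_norm by linarith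
  obtain a0 where "a0 \<in> A" using nA by blast
  hence "Bd \<ge> 0" using Bd[of a0] norm_ge_zero[of a0] by linarith
  hence D0: "D > 0" unfolding D_def using norm_ge_zero[of "\<phi> x0"] by linarith
  have ind: "\<forall>a\<in>A. \<exists>p\<in>\<phi> ` L. dist a p \<le> norm (\<phi> \<beta>) ^ n * D" for n
  proof (induction n)
    case 0 thus ?case using D x0 by auto
  next
    case (Suc n)
    show ?case
    proof
      fix a assume "a \<in> A"
      hence "a \<in> (\<Union>k<m. (\<lambda>x. \<phi> \<beta> * x + \<phi> (z k)) ` A)" using equalityD1[OF eqA] by blast
      then obtain k a' where ka: "k < m" "a' \<in> A" "a = \<phi> \<beta> * a' + \<phi> (z k)" by blast
      obtain p' where p': "p' \<in> \<phi> ` L" "dist a' p' \<le> norm (\<phi> \<beta>) ^ n * D" using Suc ka by blast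
      then obtain x' where x': "x' \<in> L" "p' = \<phi> x'" by blast
      have "\<phi> \<beta> * p' + \<phi> (z k) = \<phi> (\<beta> * x' + z k)" using hom x' LR ka by auto
      moreover have "\<beta> * x' + z k \<in> L" using fwd x' ka by simp
      ultimately have pin: "\<phi> \<beta> * p' + \<phi> (z k) \<in> \<phi> ` L" by simp
      have "dist a (\<phi> \<beta> * p' + \<phi> (z k)) = norm (\<phi> \<beta>) * dist a' p'"
        using ka by (simp add: dist_norm norm_mult[symmetric] algebra_simps)
      also have "\<dots> \<le> norm (\<phi> \<beta>) * (norm (\<phi> \<beta>) ^ n * D)" using p' by (intro mult_left_mono) auto
      finally show "\<exists>p\<in>\<phi> ` L. dist a p \<le> norm (\<phi> \<beta>) ^ Suc n * D"
        by (intro bexI[OF _ pin]) (simp add: mult.assoc)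
    qed
  qed
  have "A \<subseteq> closure (\<phi> ` L)"
  proof
    fix a assume a: "a \<in> A"
    show "a \<in> closure (\<phi> ` L)" unfolding closure_approachable
    proof (intro allI impI)
      fix e :: real assume e: "e > 0"
      obtain n where n: "norm (\<phi> \<beta>) ^ n < e / D" using real_arch_pow_inv[OF _ c1, of "e / D"] e D0 by auto
      obtain p where p: "p \<in> \<phi> ` L" "dist a p \<le> norm (\<phi> \<beta>) ^ n * D" using ind a by blast
      have "norm (\<phi> \<beta>) ^ n * D < e" using n D0 by (simp add: pos_less_divide_eq)
      thus "\<exists>y\<in>\<phi> ` L. dist y a < e" using p by (metis dist_commute le_less_trans)
    qed
  qed
  with sub show ?thesis by blast
qed

lemma same_sol:
  assumes L1R: "L1 \<subseteq> R" and d1: "discrete_set L1" and e1: "L1 = (\<Union>k<m. (\<lambda>x. \<beta> * x + z k) ` L1)"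
    and e2: "L2 = (\<Union>k<m. (\<lambda>x. \<beta> * x + z k) ` L2)"
    and eq: "L1 \<inter> cball 0 (r1 + 1) = L2 \<inter> cball 0 (r1 + 1)"
  shows "L1 \<subseteq> L2"
proof -
  have fwd: "\<beta> * x + z k \<in> L2" if "x \<in> L2" "k < m" for x k
  proof -
    have "\<beta> * x + z k \<in> (\<Union>k<m. (\<lambda>x. \<beta> * x + z k) ` L2)" using that by blast
    thus ?thesis using equalityD2[OF e2] by blast
  qed
  have ind: "\<forall>x\<in>L1. norm x - r1 \<le> norm \<beta> ^ n \<longrightarrow> x \<in> L2" for n
  proof (induction n)
    case 0
    show ?case
    proof (intro ballI impI)
      fix x assume "x \<in> L1" "norm x - r1 \<le> norm \<beta> ^ 0"
      hence "x \<in> L1 \<inter> cball 0 (r1 + 1)" by simp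
      hence "x \<in> L2 \<inter> cball 0 (r1 + 1)" by (simp only: eq)
      thus "x \<in> L2" by blast
    qed
  next
    case (Suc n)
    show ?case
    proof (intro ballI impI)
      fix x assume x: "x \<in> L1" "norm x - r1 \<le> norm \<beta> ^ Suc n"
      hence "x \<in> (\<Union>k<m. (\<lambda>x. \<beta> * x + z k) ` L1)" using equalityD1[OF e1] by blast
      then obtain k y where ky: "k < m" "y \<in> L1" "x = \<beta> * y + z k" by blast
      have "norm y - r1 \<le> (norm x - r1) / norm \<beta>" using back_bound ky by blast
      also have "(norm x - r1) / norm \<beta> \<le> norm \<beta> ^ n" using x b1 by (subst pos_divide_le_eq) (auto simp: mult.commute)
      finally have "norm y - r1 \<le> norm \<beta> ^ n" .
      hence "y \<in> L2" using Suc.IH ky(2) by blast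
      thus "x \<in> L2" using fwd ky by simp
    qed
  qed
  show ?thesis
  proof
    fix x assume x: "x \<in> L1"
    obtain n where "norm x - r1 < norm \<beta> ^ n" using real_arch_pow[OF b1] by blast
    thus "x \<in> L2" using ind[of n] x by auto
  qed
qed

lemma part3:
  defines "S \<equiv> {L. L \<subseteq> R \<and> closed L \<and> discrete_set L \<and> L = (\<Union>k<m. (\<lambda>x. \<beta> * x + z k) ` L)}"
  shows "finite S \<and> \<Union>S \<in> S \<and> (\<forall>L\<in>S. L \<subseteq> \<Union>S)"
proof -
  define D0 where "D0 = {x\<in>R. \<phi> x \<in> A}"
  have "bounded A" using cA by (rule compact_imp_bounded)
  then obtain sA where sA: "\<And>a. a \<in> A \<Longrightarrow> norm a \<le> sA" unfolding bounded_iff by blast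
  have finD: "finite (D0 \<inter> cball 0 r)" for r
  proof -
    have "D0 \<inter> cball 0 r \<subseteq> {x\<in>R. norm x \<le> r \<and> norm (\<phi> x) \<le> sA}"
      unfolding D0_def using sA by auto
    thus ?thesis by (rule finite_subset) (rule fin)
  qed

  have SD: "L \<subseteq> D0" if "L \<in> S" for L
  proof -
    have L: "L \<subseteq> R" "discrete_set L" "L = (\<Union>k<m. (\<lambda>x. \<beta> * x + z k) ` L)"
      using that unfolding S_def by blast+
    have "\<phi> ` L \<subseteq> A" by (rule sol_in_A[OF L(1,2)]) (use L(3) in simp)
    thus ?thesis using L(1) unfolding D0_def by auto
  qed
  define U where "U = \<Union>S"
  have dU: "discrete_set U" unfolding discrete_set_def
  proof (intro allI)
    fix c :: complex and r :: real
    have nb: "norm x \<le> norm c + r" if "x \<in> ball c r" for x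
    proof -
      have "norm x - norm c \<le> norm (x - c)" by (rule norm_triangle_ineq2)
      also have "norm (x - c) = dist c x" by (simp add: dist_norm norm_minus_commute)
      finally show ?thesis using that by simp
    qed
    have "U \<inter> ball c r \<subseteq> D0 \<inter> cball 0 (norm c + r)"
      using SD nb unfolding U_def by fastforce
    thus "finite (U \<inter> ball c r)" using finD by (rule finite_subset)
  qed
  have eU: "U = (\<Union>k<m. (\<lambda>x. \<beta> * x + z k) ` U)"
  proof
    show "U \<subseteq> (\<Union>k<m. (\<lambda>x. \<beta> * x + z k) ` U)"
    proof
      fix x assume "x \<in> U"
      then obtain L where L: "L \<in> S" "x \<in> L" unfolding U_def by blast
      hence "x \<in> (\<Union>k<m. (\<lambda>x. \<beta> * x + z k) ` L)" unfolding S_def by blast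
      thus "x \<in> (\<Union>k<m. (\<lambda>x. \<beta> * x + z k) ` U)" using L unfolding U_def by blast
    qed
  next
    show "(\<Union>k<m. (\<lambda>x. \<beta> * x + z k) ` U) \<subseteq> U"
    proof
      fix x assume "x \<in> (\<Union>k<m. (\<lambda>x. \<beta> * x + z k) ` U)"
      then obtain k y L where kyL: "k < m" "L \<in> S" "y \<in> L" "x = \<beta> * y + z k" unfolding U_def by blast
      hence "x \<in> (\<Union>k<m. (\<lambda>x. \<beta> * x + z k) ` L)" by blast
      hence "x \<in> L" using kyL(2) unfolding S_def by blast
      thus "x \<in> U" using kyL unfolding U_def by blast
    qed
  qed
  have "U \<subseteq> R" unfolding U_def S_def by blast
  hence US: "U \<in> S" unfolding S_def
    using dU eU discrete_closed[OF dU] by blast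
  have "inj_on (\<lambda>L. L \<inter> cball 0 (r1 + 1)) S"
  proof (rule inj_onI)
    fix L1 L2 assume L12: "L1 \<in> S" "L2 \<in> S" and ceq: "L1 \<inter> cball 0 (r1 + 1) = L2 \<inter> cball 0 (r1 + 1)"
    have h1: "L1 \<subseteq> R" "discrete_set L1" "L1 = (\<Union>k<m. (\<lambda>x. \<beta> * x + z k) ` L1)"
      using L12(1) unfolding S_def by blast+
    have h2: "L2 \<subseteq> R" "discrete_set L2" "L2 = (\<Union>k<m. (\<lambda>x. \<beta> * x + z k) ` L2)"
      using L12(2) unfolding S_def by blast+
    show "L1 = L2"
    proof (rule equalityI)
      show "L1 \<subseteq> L2" by (rule same_sol[OF h1 h2(3) ceq])
      show "L2 \<subseteq> L1" by (rule same_sol[OF h2 h1(3) ceq[symmetric]])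
    qed
  qed
  moreover have "(\<lambda>L. L \<inter> cball 0 (r1 + 1)) ` S \<subseteq> Pow (D0 \<inter> cball 0 (r1 + 1))" using SD by blast
  hence "finite ((\<lambda>L. L \<inter> cball 0 (r1 + 1)) ` S)"
    by (rule finite_subset) (rule finite_Pow_iff[THEN iffD2, OF finD])
  ultimately have "finite S" by (metis finite_imageD)
  thus ?thesis using US U_def by blast
qed

end

lemma cop_odd4: "odd (a::nat) \<Longrightarrow> coprime a 4"
proof -
  assume "odd a"
  hence "coprime a 2" by (simp add: coprime_right_2_iff_odd)
  thus ?thesis using coprime_mult_right_iff[of a 2 2] by simp
qed

lemma cop_shift: "coprime (a::nat) c \<Longrightarrow> b = a + c \<Longrightarrow> coprime a b"
  by (simp add: coprime_iff_gcd_eq_1)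

lemma num_cop:
  "\<not> coprime (2::nat) 6" "coprime (2::nat) 7" "coprime (3::nat) 7" "coprime (2::nat) 9" "coprime (4::nat) 9"
  "coprime (2::nat) 11" "coprime (3::nat) 11" "\<not> coprime (2::nat) 8" "\<not> coprime (2::nat) 10"
  "\<not> coprime (4::nat) 10" "\<not> coprime (2::nat) 12" "\<not> coprime (3::nat) 12" "\<not> coprime (4::nat) 12"
  by code_simp+

lemma n_cases:
  assumes S: "{k::nat. 1 < k \<and> 2 * k < n \<and> coprime k n} = {l}"
  shows "(n = 5 \<and> l = 2) \<or> (n = 8 \<and> l = 3) \<or> (n = 10 \<and> l = 3) \<or> (n = 12 \<and> l = 5)"
proof -
  have lin: "1 < l" "2 * l < n" "coprime l n" using S by blast+
  have uniq: "\<And>k. 1 < k \<Longrightarrow> 2 * k < n \<Longrightarrow> coprime k n \<Longrightarrow> k = l" using S by blast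
  have two: False if "1 < a" "2 * a < n" "coprime a n" "1 < b" "2 * b < n" "coprime b n" "a \<noteq> b" for a b
    using uniq[OF that(1-3)] uniq[OF that(4-6)] that(7) by simp
  show ?thesis
  proof (cases "n \<le> 12")
    case True
    have "l < 6" using lin True by linarith
    hence "l \<in> {2,3,4,5}" using lin by auto
    hence l: "l = 2 \<or> l = 3 \<or> l = 4 \<or> l = 5" by auto
    have "n = 5 \<or> n = 6 \<or> n = 7 \<or> n = 8 \<or> n = 9 \<or> n = 10 \<or> n = 11 \<or> n = 12"
      using lin True by auto
    thus ?thesis
    proof (elim disjE)
      assume n: "n = 5"
      hence "l = 2" using lin by linarith
      thus ?thesis using n by simp
    next
      assume n: "n = 6"
      hence "l = 2" using lin by linarith
      thus ?thesis using n lin(3) by simp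
    next
      assume n: "n = 7" show ?thesis using two[of 2 3] n by (simp add: num_cop)
    next
      assume n: "n = 8"
      hence "l = 2 \<or> l = 3" using lin by linarith
      thus ?thesis using n lin(3) by (elim disjE) simp_all
    next
      assume n: "n = 9" show ?thesis using two[of 2 4] n by (simp add: num_cop)
    next
      assume n: "n = 10"
      hence "l = 2 \<or> l = 3 \<or> l = 4" using lin by linarith
      thus ?thesis using n lin(3) num_cop(10) by (elim disjE) simp_all
    next
      assume n: "n = 11" show ?thesis using two[of 2 3] n by (simp add: num_cop)
    next
      assume n: "n = 12"
      hence "l = 2 \<or> l = 3 \<or> l = 4 \<or> l = 5" using lin by linarith
      thus ?thesis using n lin(3) num_cop(12,13) by (elim disjE) simp_all
    qed
  next
    case False
    show ?thesis
    proof (cases "odd n")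
      case True
      have "coprime 2 n" using True by (simp add: coprime_left_2_iff_odd)
      moreover have "coprime 4 n" using cop_odd4[OF True] by (rule coprime_commute[THEN iffD1])
      moreover have "1 < (2::nat)" "2 * 2 < n" "1 < (4::nat)" "2 * 4 < n" "(2::nat) \<noteq> 4" using False by auto
      ultimately show ?thesis using two[of 2 4] by blast
    next
      case ev: False
      then obtain m where m: "n = 2 * m" by blast
      show ?thesis
      proof (cases "odd m")
        case True
        have m7: "m \<ge> 7" using m False True by presburger
        have o2: "odd (m - 2)" using True m7 by presburger
        have o4: "odd (m - 4)" using True m7 by presburger
        have c2: "coprime (m - 2) n"
        proof -
          have "coprime (m - 2) 2" using o2 by (simp add: coprime_right_2_iff_odd)
          moreover from this have "coprime (m - 2) m" by (rule cop_shift) (use m7 in simp)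
          ultimately show ?thesis using m by simp
        qed
        have c4: "coprime (m - 4) n"
        proof -
          have "coprime (m - 4) 2" using o4 by (simp add: coprime_right_2_iff_odd)
          moreover have "coprime (m - 4) 4" using o4 by (rule cop_odd4)
          hence "coprime (m - 4) m" by (rule cop_shift) (use m7 in simp)
          ultimately show ?thesis using m by simp
        qed
        have "1 < m - 2" "2 * (m - 2) < n" "1 < m - 4" "2 * (m - 4) < n" "m - 2 \<noteq> m - 4"
          using m m7 by auto
        from two[OF this(1,2) c2 this(3,4) c4 this(5)] show ?thesis ..
      next
        case ev2: False
        then obtain t where t: "m = 2 * t" by blast
        have n4: "n = 4 * t" using m t by simp
        show ?thesis
        proof (cases "odd t")
          case True
          have t5: "t \<ge> 5" using n4 False True by presburger
          have a1: "coprime (2 * t - 1) n"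
          proof -
            have o: "odd (2 * t - 1)" using t5 by presburger
            have "coprime (2 * t - 1) 1" by simp
            hence "coprime (2 * t - 1) (2 * t)" by (rule cop_shift) (use t5 in simp)
            hence "coprime (2 * t - 1) t" by simp
            moreover have "coprime (2 * t - 1) 4" using o by (rule cop_odd4)
            ultimately show ?thesis using n4 by simp
          qed
          have a2: "coprime (t + 2) n"
          proof -
            have o: "odd (t + 2)" using True by presburger
            have "coprime 2 t" using True by (simp add: coprime_left_2_iff_odd)
            hence "coprime t 2" by (rule coprime_commute[THEN iffD1])
            hence "coprime t (t + 2)" by (rule cop_shift) simp
            hence "coprime (t + 2) t" by (rule coprime_commute[THEN iffD1])
            moreover have "coprime (t + 2) 4" using o by (rule cop_odd4)
            ultimately show ?thesis using n4 by simp
          qed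
          have "1 < 2 * t - 1" "2 * (2 * t - 1) < n" "1 < t + 2" "2 * (t + 2) < n" "2 * t - 1 \<noteq> t + 2"
            using n4 t5 by auto
          from two[OF this(1,2) a1 this(3,4) a2 this(5)] show ?thesis ..
        next
          case ev3: False
          have t4: "t \<ge> 4" using n4 False ev3 by presburger
          have a1: "coprime (t - 1) n"
          proof -
            have o: "odd (t - 1)" using ev3 t4 by presburger
            have "coprime (t - 1) 1" by simp
            hence "coprime (t - 1) t" by (rule cop_shift) (use t4 in simp)
            moreover have "coprime (t - 1) 4" using o by (rule cop_odd4)
            ultimately show ?thesis using n4 by simp
          qed
          have a2: "coprime (t + 1) n"
          proof -
            have o: "odd (t + 1)" using ev3 by presburger
            have "coprime t (t + 1)" by simp
            hence "coprime (t + 1) t" by (rule coprime_commute[THEN iffD1])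
            moreover have "coprime (t + 1) 4" using o by (rule cop_odd4)
            ultimately show ?thesis using n4 by simp
          qed
          have "1 < t - 1" "2 * (t - 1) < n" "1 < t + 1" "2 * (t + 1) < n" "t - 1 \<noteq> t + 1"
            using n4 t4 by auto
          from two[OF this(1,2) a1 this(3,4) a2 this(5)] show ?thesis ..
        qed
      qed
    qed
  qed
qed

lemma mp_pCons: "map_poly (of_int::int\<Rightarrow>complex) (pCons a p) = pCons (of_int a) (map_poly of_int p)"
  by (rule poly_eqI) (simp add: coeff_map_poly coeff_pCons split: nat.split)
lemma "ipoly [:1,1,1,1,1:] y = 1 + y * (1 + y * (1 + y * (1 + y)))" by (simp add: mp_pCons)

lemma e8: "ipoly [:1,0,0,0,1:] y = 1 + y^4" by (simp add: mp_pCons eval_nat_numeral)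
lemma e10: "ipoly [:1,-1,1,-1,1:] y = 1 - y + y^2 - y^3 + y^4" by (simp add: mp_pCons eval_nat_numeral algebra_simps)
lemma e12: "ipoly [:1,0,-1,0,1:] y = 1 - y^2 + y^4" by (simp add: mp_pCons eval_nat_numeral algebra_simps)

lemma r8: "y^4 = -1 \<Longrightarrow> ipoly [:1,0,0,0,1:] y = 0"
  by (simp add: e8)

lemma r10: "y^5 = -1 \<Longrightarrow> y \<noteq> -1 \<Longrightarrow> ipoly [:1,-1,1,-1,1:] y = 0"
proof -
  assume a: "y^5 = -1" "y \<noteq> -1"
  have "(y + 1) * (1 - y + y^2 - y^3 + y^4) = y^5 + 1"
    by (simp add: algebra_simps eval_nat_numeral)
  with a have "(y + 1) * (1 - y + y^2 - y^3 + y^4) = 0" by simp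
  moreover have "y + 1 \<noteq> 0"
  proof
    assume "y + 1 = 0"
    hence "y = -1" by (simp add: add_eq_0_iff2)
    with a(2) show False by simp
  qed
  ultimately show ?thesis by (simp add: e10)
qed

lemma r12: "y^6 = -1 \<Longrightarrow> y^2 \<noteq> -1 \<Longrightarrow> ipoly [:1,0,-1,0,1:] y = 0"
proof -
  assume a: "y^6 = -1" "y^2 \<noteq> -1"
  have "(y^2 + 1) * (1 - y^2 + y^4) = y^6 + 1"
    by (simp add: algebra_simps eval_nat_numeral)
  with a have "(y^2 + 1) * (1 - y^2 + y^4) = 0" by simp
  moreover have "y^2 + 1 \<noteq> 0"
  proof
    assume "y^2 + 1 = 0"
    hence "y^2 = -1" by (simp add: add_eq_0_iff2)
    with a(2) show False by simp
  qed
  ultimately show ?thesis by (simp add: e12)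
qed

lemma r5: "y^5 = 1 \<Longrightarrow> y \<noteq> 1 \<Longrightarrow> ipoly [:1,1,1,1,1:] y = 0"
proof -
  assume a: "y^5 = 1" "y \<noteq> 1"
  have "(y - 1) * (1 + y * (1 + y * (1 + y * (1 + y)))) = y^5 - 1"
    by (simp add: algebra_simps eval_nat_numeral)
  with a have "(y - 1) * (1 + y * (1 + y * (1 + y * (1 + y)))) = 0" by simp
  with a show ?thesis by (simp add: mp_pCons)
qed

lemma zeta_pow:
  fixes n k :: nat
  shows "exp (2 * pi * \<i> / of_nat n) ^ k = exp (2 * of_real pi * \<i> * of_nat k / of_nat n)"
proof -
  have "exp (2 * pi * \<i> / of_nat n) ^ k = exp (of_nat k * (2 * pi * \<i> / of_nat n))"
    by (rule exp_of_nat_mult[symmetric])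
  also have "of_nat k * (2 * pi * \<i> / of_nat n) = 2 * of_real pi * \<i> * of_nat k / of_nat n"
    by (simp add: field_simps)
  finally show ?thesis .
qed

lemma zeta_one:
  fixes n k :: nat
  assumes "n \<ge> 1"
  shows "exp (2 * pi * \<i> / of_nat n) ^ k = 1 \<longleftrightarrow> n dvd k"
  unfolding zeta_pow using complex_root_unity_eq_1[OF assms] by simp

lemma zeta_norm: "norm (exp (2 * pi * \<i> / of_nat n)) = 1"
  by (simp add: norm_exp_eq_Re)

lemma sq1: "(x::complex)^2 = 1 \<Longrightarrow> x \<noteq> 1 \<Longrightarrow> x = -1"
  by (metis power2_eq_1_iff)

lemma cnj_unit: "norm (x::complex) = 1 \<Longrightarrow> y * x = 1 \<Longrightarrow> cnj x = y"
proof -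
  assume "norm x = 1" "y * x = 1"
  have "cnj x * x = 1" using \<open>norm x = 1\<close> by (metis complex_norm_square mult.commute of_real_1 power_one)
  with \<open>y * x = 1\<close> have "cnj x * x = y * x" by simp
  moreover have "x \<noteq> 0" using \<open>norm x = 1\<close> by auto
  ultimately show ?thesis by simp
qed

lemma case_b_data:
  assumes "single_conj_b b R \<phi>"
  shows "\<exists>\<gamma> w P N. R = Zring \<gamma> \<and> b \<in> R \<and> (\<forall>q. \<phi> (ipoly q \<gamma>) = ipoly q w) \<and> norm (\<phi> b) < 1 \<and>
           lead_coeff P = 1 \<and> ipoly P \<gamma> = 0 \<and> ipoly P w = 0 \<and> finite N \<and> degree P \<le> card N \<and>
           N \<subseteq> {\<gamma>, cnj \<gamma>, w, cnj w}"
proof -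
  obtain n l where n1: "n \<ge> 1" and H: "R = Zring (exp (2 * pi * \<i> / of_nat n))" "b \<in> R"
      "{k::nat. 1 < k \<and> 2 * k < n \<and> coprime k n} = {l}"
      "\<forall>q. \<phi> (ipoly q (exp (2 * pi * \<i> / of_nat n))) = ipoly q (exp (2 * pi * \<i> / of_nat n) ^ l)"
      "norm (\<phi> b) < 1"
    using assms unfolding single_conj_b_def Let_def by blast
  define \<zeta> where "\<zeta> = exp (2 * pi * \<i> / of_nat n)"
  have Z: "\<And>k. \<zeta> ^ k = 1 \<longleftrightarrow> n dvd k" unfolding \<zeta>_def by (rule zeta_one[OF n1])
  have nZ: "norm \<zeta> = 1" unfolding \<zeta>_def by (rule zeta_norm)
  have lin: "1 < l" "2 * l < n" using H(3) by blast+
  have inj: "a = c" if "a < n" "c < n" "\<zeta> ^ a = \<zeta> ^ c" for a c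
  proof (rule ccontr)
    assume ne: "a \<noteq> c"
    have nz: "\<zeta> \<noteq> 0" using nZ by auto
    { fix a c assume ac: "a < c" "c < n" "\<zeta> ^ a = \<zeta> ^ c"
      have "\<zeta> ^ c = \<zeta> ^ a * \<zeta> ^ (c - a)" using ac(1) by (simp flip: power_add)
      hence "\<zeta> ^ (c - a) = 1" using ac(3) nz by simp
      hence "n dvd (c - a)" using Z by simp
      moreover have "0 < c - a" "c - a < n" using ac by auto
      ultimately have False using nat_dvd_not_less by blast }
    note * = this
    show False using ne that *[of a c] *[of c a] by (cases "a < c") auto
  qed
  have cz: "cnj \<zeta> = \<zeta> ^ (n - 1)"
  proof (rule cnj_unit[OF nZ])
    have "\<zeta> ^ (n - 1) * \<zeta> = \<zeta> ^ n" using n1 by (simp flip: power_Suc2)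
    thus "\<zeta> ^ (n - 1) * \<zeta> = 1" using Z by simp
  qed
  have czl: "cnj (\<zeta> ^ l) = \<zeta> ^ (n - l)"
  proof (rule cnj_unit)
    show "norm (\<zeta> ^ l) = 1" using nZ by (simp add: norm_power)
    have "\<zeta> ^ (n - l) * \<zeta> ^ l = \<zeta> ^ n" using lin by (simp flip: power_add)
    thus "\<zeta> ^ (n - l) * \<zeta> ^ l = 1" using Z by simp
  qed
  define N where "N = {\<zeta>, cnj \<zeta>, \<zeta> ^ l, cnj (\<zeta> ^ l)}"
  have cardN: "card N = 4"
  proof -
    have "N = {\<zeta> ^ 1, \<zeta> ^ (n - 1), \<zeta> ^ l, \<zeta> ^ (n - l)}" unfolding N_def cz czl by simp
    moreover have neq: "\<zeta> ^ a \<noteq> \<zeta> ^ c" if "a < n" "c < n" "a \<noteq> c" for a c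
      using inj that by blast
    have "\<zeta> ^ 1 \<noteq> \<zeta> ^ (n - 1)" "\<zeta> ^ 1 \<noteq> \<zeta> ^ l" "\<zeta> ^ 1 \<noteq> \<zeta> ^ (n - l)"
      "\<zeta> ^ (n - 1) \<noteq> \<zeta> ^ l" "\<zeta> ^ (n - 1) \<noteq> \<zeta> ^ (n - l)" "\<zeta> ^ l \<noteq> \<zeta> ^ (n - l)"
      by (intro neq; use lin in linarith)+
    ultimately show ?thesis by simp
  qed
  have "\<exists>P. lead_coeff P = 1 \<and> degree P = 4 \<and> ipoly P \<zeta> = 0 \<and> ipoly P (\<zeta> ^ l) = 0"
    using n_cases[OF H(3)]
  proof (elim disjE conjE)
    assume n: "n = 5" and l: "l = 2"
    have a: "\<zeta>^5 = 1" using Z[of 5] n by simp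
    have b: "\<zeta> \<noteq> 1" using Z[of 1] n by simp
    have c: "(\<zeta>^2)^5 = 1" using Z[of 10] n by (simp flip: power_mult)
    have d: "\<zeta>^2 \<noteq> 1" using Z[of 2] n by simp
    show ?thesis using r5[OF a b] r5[OF c d] l by (intro exI[of _ "[:1,1,1,1,1:]"]) simp
  next
    assume n: "n = 8" and l: "l = 3"
    have a: "\<zeta>^4 = -1"
    proof (rule sq1)
      show "(\<zeta>^4)^2 = 1" using Z[of 8] n by (simp flip: power_mult)
      show "\<zeta>^4 \<noteq> 1" using Z[of 4] n by simp
    qed
    have "(\<zeta>^3)^4 = \<zeta>^8 * \<zeta>^4" by (simp flip: power_mult power_add)
    also have "\<zeta>^8 = 1" using Z[of 8] n by simp
    finally have c: "(\<zeta>^3)^4 = -1" using a by simp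
    show ?thesis using r8[OF a] r8[OF c] l by (intro exI[of _ "[:1,0,0,0,1:]"]) simp
  next
    assume n: "n = 10" and l: "l = 3"
    have a: "\<zeta>^5 = -1"
    proof (rule sq1)
      show "(\<zeta>^5)^2 = 1" using Z[of 10] n by (simp flip: power_mult)
      show "\<zeta>^5 \<noteq> 1" using Z[of 5] n by simp
    qed
    have b: "\<zeta> \<noteq> -1"
    proof
      assume "\<zeta> = -1"
      hence "\<zeta>^2 = 1" by simp
      thus False using Z[of 2] n by simp
    qed
    have "(\<zeta>^3)^5 = \<zeta>^10 * \<zeta>^5" by (simp flip: power_mult power_add)
    also have "\<zeta>^10 = 1" using Z[of 10] n by simp
    finally have c: "(\<zeta>^3)^5 = -1" using a by simp
    have d: "\<zeta>^3 \<noteq> -1"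
    proof
      assume "\<zeta>^3 = -1"
      hence "(\<zeta>^3)^2 = 1" by simp
      hence "\<zeta>^6 = 1" by (simp flip: power_mult)
      thus False using Z[of 6] n by simp
    qed
    show ?thesis using r10[OF a b] r10[OF c d] l by (intro exI[of _ "[:1,-1,1,-1,1:]"]) simp
  next
    assume n: "n = 12" and l: "l = 5"
    have a: "\<zeta>^6 = -1"
    proof (rule sq1)
      show "(\<zeta>^6)^2 = 1" using Z[of 12] n by (simp flip: power_mult)
      show "\<zeta>^6 \<noteq> 1" using Z[of 6] n by simp
    qed
    have b: "\<zeta>^2 \<noteq> -1"
    proof
      assume "\<zeta>^2 = -1"
      hence "(\<zeta>^2)^2 = 1" by simp
      hence "\<zeta>^4 = 1" by (simp flip: power_mult)
      thus False using Z[of 4] n by simp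
    qed
    have "(\<zeta>^5)^6 = \<zeta>^24 * \<zeta>^6" by (simp flip: power_mult power_add)
    also have "\<zeta>^24 = 1" using Z[of 24] n by simp
    finally have c: "(\<zeta>^5)^6 = -1" using a by simp
    have d: "(\<zeta>^5)^2 \<noteq> -1"
    proof
      assume "(\<zeta>^5)^2 = -1"
      hence "((\<zeta>^5)^2)^2 = 1" by simp
      hence "\<zeta>^20 = 1" by (simp flip: power_mult)
      thus False using Z[of 20] n by simp
    qed
    show ?thesis using r12[OF a b] r12[OF c d] l by (intro exI[of _ "[:1,0,-1,0,1:]"]) simp
  qed
  then obtain P where P: "lead_coeff P = 1" "degree P = 4" "ipoly P \<zeta> = 0" "ipoly P (\<zeta> ^ l) = 0" by blast
  have H4: "\<forall>q. \<phi> (ipoly q \<zeta>) = ipoly q (\<zeta> ^ l)" using H(4) unfolding \<zeta>_def .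
  have R: "R = Zring \<zeta>" using H(1) unfolding \<zeta>_def .
  show ?thesis
  proof (rule exI[of _ \<zeta>], rule exI[of _ "\<zeta> ^ l"], rule exI[of _ P], rule exI[of _ N], intro conjI)
    show "finite N" unfolding N_def by simp
    show "degree P \<le> card N" using P(2) cardN by simp
    show "N \<subseteq> {\<zeta>, cnj \<zeta>, \<zeta> ^ l, cnj (\<zeta> ^ l)}" unfolding N_def by (rule order_refl)
  qed (use R H(2,5) H4 P(1,3,4) in blast)+
qed

lemma ipoly_X: "ipoly [:0,1:] x = x" by (simp add: mp_pCons)

lemma case_a_data:
  assumes "single_conj_a b R \<phi>"
  shows "\<exists>\<gamma> w P N. R = Zring \<gamma> \<and> b \<in> R \<and> (\<forall>q. \<phi> (ipoly q \<gamma>) = ipoly q w) \<and> norm (\<phi> b) < 1 \<and>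
           lead_coeff P = 1 \<and> ipoly P \<gamma> = 0 \<and> ipoly P w = 0 \<and> finite N \<and> degree P \<le> card N \<and>
           N \<subseteq> {\<gamma>, cnj \<gamma>, w, cnj w}"
proof -
  obtain p b' where R: "R = Zring b" and mp: "int_minpoly p b"
    and roots: "{w. ipoly p w = 0} = {b, cnj b, b', cnj b'}"
    and ph: "\<forall>q. \<phi> (ipoly q b) = ipoly q b'" and nb': "norm b' < 1"
    using assms unfolding single_conj_a_def by blast
  have lc: "lead_coeff p = 1" and irr: "irreducible p" and pb: "ipoly p b = 0"
    using mp unfolding int_minpoly_def by auto
  have bR: "b \<in> R" unfolding R Zring_def using ipoly_X[of b] by (metis (mono_tags, lifting) mem_Collect_eq)
  have phb: "\<phi> b = b'" using ph[rule_format, of "[:0,1:]"] by (simp add: ipoly_X)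
  have pb': "ipoly p b' = 0" using roots by blast
  have p0: "p \<noteq> 0" using lc by auto
  have fin: "finite {w. ipoly p w = 0}"
    by (rule poly_roots_finite) (simp add: mp_eq0 p0)
  have deg: "degree p \<le> card {w. ipoly p w = 0}" by (rule irr_card_roots[OF irr lc pb])
  show ?thesis
    by (rule exI[of _ b], rule exI[of _ b'], rule exI[of _ p], rule exI[of _ "{w. ipoly p w = 0}"])
       (use R bR ph phb nb' lc pb pb' fin deg roots in auto)
qed

lemma data_all:
  assumes "single_conjugate_setting \<beta> R \<phi>"
  shows "1 < norm \<beta> \<and> (\<exists>\<gamma> w P N. R = Zring \<gamma> \<and> \<beta> \<in> R \<and> (\<forall>q. \<phi> (ipoly q \<gamma>) = ipoly q w) \<and> norm (\<phi> \<beta>) < 1 \<and>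
           lead_coeff P = 1 \<and> ipoly P \<gamma> = 0 \<and> ipoly P w = 0 \<and> finite N \<and> degree P \<le> card N \<and>
           N \<subseteq> {\<gamma>, cnj \<gamma>, w, cnj w})"
proof
  show "1 < norm \<beta>" using assms unfolding single_conjugate_setting_def pisot_unit_def by blast
  show "\<exists>\<gamma> w P N. R = Zring \<gamma> \<and> \<beta> \<in> R \<and> (\<forall>q. \<phi> (ipoly q \<gamma>) = ipoly q w) \<and> norm (\<phi> \<beta>) < 1 \<and>
           lead_coeff P = 1 \<and> ipoly P \<gamma> = 0 \<and> ipoly P w = 0 \<and> finite N \<and> degree P \<le> card N \<and>
           N \<subseteq> {\<gamma>, cnj \<gamma>, w, cnj w}"
    using assms case_a_data case_b_data unfolding single_conjugate_setting_def by blast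
qed

lemma ifs_from_setting:
  assumes setting: "single_conjugate_setting \<beta> R \<phi>"
    and z_in_R: "\<forall>k<m. z k \<in> R"
    and A_attr: "compact A" "A \<noteq> {}"
      "A = (\<Union>k<m. (\<lambda>x. \<phi> \<beta> * x + \<phi> (z k)) ` A)"
  shows "ifs \<beta> R \<phi> m z A"
proof -
  obtain \<gamma> w P N where b1: "1 < norm \<beta>" and D: "R = Zring \<gamma>" "\<beta> \<in> R" "\<forall>q. \<phi> (ipoly q \<gamma>) = ipoly q w"
    "norm (\<phi> \<beta>) < 1" "lead_coeff P = 1" "ipoly P \<gamma> = 0" "ipoly P w = 0" "finite N" "degree P \<le> card N"
    "N \<subseteq> {\<gamma>, cnj \<gamma>, w, cnj w}"
    using data_all[OF setting] by blast
  show ?thesis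
  proof (unfold_locales)
    fix x k assume x: "x \<in> R" and k: "k < m"
    obtain qx where qx: "x = ipoly qx \<gamma>" using x D(1) unfolding Zring_def by blast
    obtain qb where qb: "\<beta> = ipoly qb \<gamma>" using D(2) D(1) unfolding Zring_def by blast
    obtain qz where qz: "z k = ipoly qz \<gamma>" using z_in_R k D(1) unfolding Zring_def by blast
    have "\<beta> * x + z k = ipoly (qb * qx + qz) \<gamma>" using qx qb qz by (simp add: ipoly_add ipoly_mult)
    hence "\<phi> (\<beta> * x + z k) = ipoly (qb * qx + qz) w" using D(3) by simp
    also have "\<dots> = ipoly qb w * ipoly qx w + ipoly qz w" by (simp add: ipoly_add ipoly_mult)
    also have "\<dots> = \<phi> \<beta> * \<phi> x + \<phi> (z k)" using qx qb qz D(3) by simp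
    finally show "\<phi> (\<beta> * x + z k) = \<phi> \<beta> * \<phi> x + \<phi> (z k)" .
  next
    show "1 < norm \<beta>" by fact
    show "norm (\<phi> \<beta>) < 1" by fact
  next
    fix r s
    have "{x\<in>R. norm x \<le> r \<and> norm (\<phi> x) \<le> s} \<subseteq>
          fst ` {(ipoly q \<gamma>, ipoly q w) | q. norm (ipoly q \<gamma>) \<le> r \<and> norm (ipoly q w) \<le> s}"
    proof
      fix x assume "x \<in> {x\<in>R. norm x \<le> r \<and> norm (\<phi> x) \<le> s}"
      then obtain q where "x = ipoly q \<gamma>" "norm x \<le> r" "norm (\<phi> x) \<le> s" using D(1) unfolding Zring_def by blast
      thus "x \<in> fst ` {(ipoly q \<gamma>, ipoly q w) | q. norm (ipoly q \<gamma>) \<le> r \<and> norm (ipoly q w) \<le> s}"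
        using D(3) by (intro image_eqI[of _ _ "(ipoly q \<gamma>, ipoly q w)"]) auto
    qed
    moreover have "finite {(ipoly q \<gamma>, ipoly q w) | q. norm (ipoly q \<gamma>) \<le> r \<and> norm (ipoly q w) \<le> s}"
      by (rule fin_lattice[OF D(5-10)])
    ultimately show "finite {x\<in>R. norm x \<le> r \<and> norm (\<phi> x) \<le> s}"
      by (meson finite_imageI finite_subset)
  qed (use A_attr in auto)
qed

theorem proposition2:
  fixes \<beta> :: complex and R :: "complex set" and \<phi> :: "complex \<Rightarrow> complex"
    and m :: nat and z :: "nat \<Rightarrow> complex" and A :: "complex set"
  assumes setting: "single_conjugate_setting \<beta> R \<phi>"
    and z_in_R: "\<forall>k<m. z k \<in> R"
    and A_attr: "compact A" "A \<noteq> {}"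
      "A = (\<Union>k<m. (\<lambda>x. \<phi> \<beta> * x + \<phi> (z k)) ` A)"
  shows
    "(\<forall>xs. set xs \<subseteq> R \<and> is_cycle (\<lambda>k x. \<beta> * x + z k) m xs \<longrightarrow>
        is_cycle (\<lambda>k x. \<phi> \<beta> * x + \<phi> (z k)) m (map \<phi> xs) \<and> \<phi> ` set xs \<subseteq> A)
     \<and> (\<forall>\<Lambda>. \<Lambda> \<subseteq> R \<and> \<Lambda> \<noteq> {} \<and> closed \<Lambda> \<and> discrete_set \<Lambda> \<and>
          \<Lambda> = (\<Union>k<m. (\<lambda>x. \<beta> * x + z k) ` \<Lambda>) \<longrightarrow>
          \<phi> ` \<Lambda> \<subseteq> A \<and> A \<subseteq> closure (\<phi> ` \<Lambda>))
     \<and> (let S = {\<Lambda>. \<Lambda> \<subseteq> R \<and> closed \<Lambda> \<and> discrete_set \<Lambda> \<and>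
                     \<Lambda> = (\<Union>k<m. (\<lambda>x. \<beta> * x + z k) ` \<Lambda>)}
        in finite S \<and> \<Union>S \<in> S \<and> (\<forall>\<Lambda>\<in>S. \<Lambda> \<subseteq> \<Union>S))"
proof -
  interpret ifs \<beta> R \<phi> m z A by (rule ifs_from_setting[OF setting z_in_R A_attr])
  have p1: "\<forall>xs. set xs \<subseteq> R \<and> is_cycle (\<lambda>k x. \<beta> * x + z k) m xs \<longrightarrow>
        is_cycle (\<lambda>k x. \<phi> \<beta> * x + \<phi> (z k)) m (map \<phi> xs) \<and> \<phi> ` set xs \<subseteq> A"
    using part1 by blast
  have p2: "\<forall>\<Lambda>. \<Lambda> \<subseteq> R \<and> \<Lambda> \<noteq> {} \<and> closed \<Lambda> \<and> discrete_set \<Lambda> \<and>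
          \<Lambda> = (\<Union>k<m. (\<lambda>x. \<beta> * x + z k) ` \<Lambda>) \<longrightarrow>
          \<phi> ` \<Lambda> \<subseteq> A \<and> A \<subseteq> closure (\<phi> ` \<Lambda>)"
  proof (intro allI impI)
    fix L assume L: "L \<subseteq> R \<and> L \<noteq> {} \<and> closed L \<and> discrete_set L \<and> L = (\<Union>k<m. (\<lambda>x. \<beta> * x + z k) ` L)"
    show "\<phi> ` L \<subseteq> A \<and> A \<subseteq> closure (\<phi> ` L)"
      by (rule part2) (use L in blast)+
  qed
  have p3: "let S = {\<Lambda>. \<Lambda> \<subseteq> R \<and> closed \<Lambda> \<and> discrete_set \<Lambda> \<and>
                     \<Lambda> = (\<Union>k<m. (\<lambda>x. \<beta> * x + z k) ` \<Lambda>)}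
        in finite S \<and> \<Union>S \<in> S \<and> (\<forall>\<Lambda>\<in>S. \<Lambda> \<subseteq> \<Union>S)"
    unfolding Let_def by (rule part3)
  show ?thesis using p1 p2 p3 by blast
qed

end
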